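(* Assume the setting described in the context. Let $\rho(\mu):=\min_{a\in A^-}I_{a^*,a}(\hat L_a(a))$. Then under both general and binary contracts, $$C^{\mathrm{SB}}_n(\mu,a^*,u,c)-C^{\mathrm{FB}}(u,c,a^* )=\exp[-\rho(\mu)n+o(n)],\qquad C^{\mathrm{bin}}_n(\mu,a^*,u,c)-C^{\mathrm{FB}}(u,c,a^* )=\exp[-\rho(\mu)n+o(n)].$$
   Context: Finite action set $A$, target $a^*\in A$. A measurable signal space $Z$ with a $\sigma$-finite measure $\nu$. A sequence $\mu=(\mu^n)_n$ of monitoring technologies: for each $n$ and $a\in A$, $\mu^n_a$ is a probability measure on $Z$, absolutely continuous w.r.t. $\nu$ with density $g^n_a$. For $a'\in A\setminus\{a^*\}$, the score $L_n(a')=\frac1n\log\frac{g^n_{a^*}(z)}{g^n_{a'}(z)}$ is well-defined $\mu^n_a$-almost surely for every $a\in A$; $\mathbb{P}_a$ denotes probability under $\mu^n_a$. Large deviations: for each $a\in A$, $a'\neq a^*$ there is $I_{a,a'}:\mathbb{R}\to[0,\infty]$ such that for every measurable $B\subseteq\mathbb{R}$, $-\inf_{\ell\in\mathrm{int}B}I_{a,a'}(\ell)\le\liminf_n\frac1n\log\mathbb{P}_a[L_n(a')\in B]\le\limsup_n\frac1n\log\mathbb{P}_a[L_n(a')\in B]\le-\inf_{\ell\in\mathrm{cl}B}I_{a,a'}(\ell)$. Identification: $I_{a,a'}$ has a unique minimizer $\hat L_a(a')$, and $\hat L_a(a')\neq\hat L_{\tilde a}(a')$ for $a\neq\tilde a$.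 Regularity: each $I_{a,a'}$ has compact level sets, and $I_{a^*,a'}$ is continuous at $\hat L_{a'}(a')$ and at $\hat L_{a^*}(a')$. Payoffs: $\underline w\in\mathbb{R}$; $u:[\underline w,\infty)\to\mathbb{R}$ is $C^2$, $u'>0$, $u''<0$, $\lim_{w\to\infty}u'(w)=0$; $c:A\to\mathbb{R}$ with $c(A)\subseteq\mathrm{int}\,u([\underline w,\infty))$, $c(a^* )>c(a)$ for some $a$ and $c(a^* )\neq c(a)$ for all $a\neq a^*$; outside option $0$; $h=u^{-1}$. A contract $w:Z\to[\underline w,\infty)$ satisfies (IC) if $\int u(w)d\mu^n_{a^*}-c(a^* )\ge\int u(w)d\mu^n_a-c(a)$ for all $a\in A$ and (IR) if $\int u(w)d\mu^n_{a^*}-c(a^* )\ge0$. $C^{\mathrm{SB}}_n(\mu,a^*,u,c)$ is the infimum of $\int w\,d\mu^n_{a^*}$ over contracts satisfying (IC),(IR), and $C^{\mathrm{bin}}_n$ the same over contracts taking exactly two values. First-best cost $C^{\mathrm{FB}}(u,c,a^* )=h(c(a^* ))$. $A^-=\{a:c(a)<c(a^* )\}$. $f(n)=\exp[-rn+o(n)]$ means $\frac1n\log f(n)\to-r$. *)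

theory Defs
  imports "HOL-Probability.Probability"
begin

definition mon :: "'z measure \<Rightarrow> (nat \<Rightarrow> 'a \<Rightarrow> 'z \<Rightarrow> real) \<Rightarrow> nat \<Rightarrow> 'a \<Rightarrow> 'z measure" where
  "mon nu g n a = density nu (\<lambda>z. ennreal (g n a z))"

definition score :: "(nat \<Rightarrow> 'a \<Rightarrow> 'z \<Rightarrow> real) \<Rightarrow> 'a \<Rightarrow> nat \<Rightarrow> 'a \<Rightarrow> 'z \<Rightarrow> real" where
  "score g astar n a' z = ln (g n astar z / g n a' z) / real n"

definition eln :: "real \<Rightarrow> ereal" where
  "eln x = (if x \<le> 0 then -\<infinity> else ereal (ln x))"

definition ld_rate :: "'z measure \<Rightarrow> (nat \<Rightarrow> 'a \<Rightarrow> 'z \<Rightarrow> real) \<Rightarrow> 'a \<Rightarrow> 'a \<Rightarrow> 'a \<Rightarrow> real set \<Rightarrow> nat \<Rightarrow> ereal" where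
  "ld_rate nu g astar a a' B n =
     ereal (1 / real n) * eln (measure (mon nu g n a) {z \<in> space nu. score g astar n a' z \<in> B})"

text \<open>Contracts satisfying (IC) and (IR); integrability conditions make the integrals meaningful
  (u(w) is bounded below, so its integral is never -infinity; if it is +infinity under some a,
   (IC) fails; contracts with infinite expected wage do not affect the infimum).\<close>
definition admissible ::
  "'z measure \<Rightarrow> (nat \<Rightarrow> 'a \<Rightarrow> 'z \<Rightarrow> real) \<Rightarrow> 'a set \<Rightarrow> 'a \<Rightarrow> real \<Rightarrow> (real \<Rightarrow> real)
     \<Rightarrow> ('a \<Rightarrow> real) \<Rightarrow> nat \<Rightarrow> ('z \<Rightarrow> real) \<Rightarrow> bool" where
  "admissible nu g A astar wlow u c n w \<longleftrightarrow>
     w \<in> borel_measurable nu \<and> (\<forall>z\<in>space nu. wlow \<le> w z) \<and>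
     integrable (mon nu g n astar) w \<and>
     (\<forall>a\<in>A. integrable (mon nu g n a) (\<lambda>z. u (w z))) \<and>
     (\<forall>a\<in>A. (\<integral>z. u (w z) \<partial>mon nu g n astar) - c astar \<ge> (\<integral>z. u (w z) \<partial>mon nu g n a) - c a) \<and>
     (\<integral>z. u (w z) \<partial>mon nu g n astar) - c astar \<ge> 0"

definition C_SB ::
  "'z measure \<Rightarrow> (nat \<Rightarrow> 'a \<Rightarrow> 'z \<Rightarrow> real) \<Rightarrow> 'a set \<Rightarrow> 'a \<Rightarrow> real \<Rightarrow> (real \<Rightarrow> real)
     \<Rightarrow> ('a \<Rightarrow> real) \<Rightarrow> nat \<Rightarrow> ereal" where
  "C_SB nu g A astar wlow u c n =
     (INF w \<in> {w. admissible nu g A astar wlow u c n w}. ereal (\<integral>z. w z \<partial>mon nu g n astar))"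

definition C_bin ::
  "'z measure \<Rightarrow> (nat \<Rightarrow> 'a \<Rightarrow> 'z \<Rightarrow> real) \<Rightarrow> 'a set \<Rightarrow> 'a \<Rightarrow> real \<Rightarrow> (real \<Rightarrow> real)
     \<Rightarrow> ('a \<Rightarrow> real) \<Rightarrow> nat \<Rightarrow> ereal" where
  "C_bin nu g A astar wlow u c n =
     (INF w \<in> {w. admissible nu g A astar wlow u c n w \<and> card (w ` space nu) = 2}.
        ereal (\<integral>z. w z \<partial>mon nu g n astar))"

definition C_FB :: "real \<Rightarrow> (real \<Rightarrow> real) \<Rightarrow> ('a \<Rightarrow> real) \<Rightarrow> 'a \<Rightarrow> real" where
  "C_FB wlow u c astar = inv_into {wlow..} u (c astar)"

text \<open>f(n) = exp[-r n + o(n)]: f(n) is eventually a positive real and (1/n) log f(n) tends to -r.\<close>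
definition exp_rate :: "(nat \<Rightarrow> ereal) \<Rightarrow> ereal \<Rightarrow> bool" where
  "exp_rate f r \<longleftrightarrow> (\<forall>\<^sub>F n in sequentially. 0 < f n \<and> f n < \<infinity>) \<and>
     ((\<lambda>n. ereal (ln (real_of_ereal (f n)) / real n)) \<longlonglongrightarrow> - r)"

end

theory Submission
  imports Defs
begin


lemma mvt_within:
  fixes f f' :: "real \<Rightarrow> real"
  assumes "wl \<le> x" "x < y"
    and d: "\<And>w. wl \<le> w \<Longrightarrow> (f has_real_derivative f' w) (at w within {wl..})"
  shows "\<exists>\<xi>. x < \<xi> \<and> \<xi> < y \<and> f y - f x = f' \<xi> * (y - x)"
proof -
  have "\<And>w. x \<le> w \<Longrightarrow> w \<le> y \<Longrightarrow> (f has_derivative ((*) (f' w))) (at w within {x..y})"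
  proof -
    fix w assume "x \<le> w" "w \<le> y"
    then have "(f has_real_derivative f' w) (at w within {wl..})" using d assms(1) by auto
    then have "(f has_real_derivative f' w) (at w within {x..y})"
      by (rule DERIV_subset) (use assms(1) in auto)
    then show "(f has_derivative ((*) (f' w))) (at w within {x..y})"
      by (simp add: has_field_derivative_def)
  qed
  from mvt_simple[OF assms(2) this] show ?thesis by (auto simp: mult.commute)
qed

locale ufacts =
  fixes wlow :: real and u u' u'' :: "real \<Rightarrow> real"
  assumes u_d1: "\<And>w. wlow \<le> w \<Longrightarrow> (u has_real_derivative u' w) (at w within {wlow..})"
    and u_d2: "\<And>w. wlow \<le> w \<Longrightarrow> (u' has_real_derivative u'' w) (at w within {wlow..})"
    and u'_pos: "\<And>w. wlow \<le> w \<Longrightarrow> 0 < u' w"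
    and u''_neg: "\<And>w. wlow \<le> w \<Longrightarrow> u'' w < 0"
begin

lemma u_inc: "wlow \<le> x \<Longrightarrow> x < y \<Longrightarrow> u x < u y"
  using mvt_within[OF _ _ u_d1, of x y] u'_pos
  by (smt (verit, best) mult_pos_pos)

lemma u_mono: "wlow \<le> x \<Longrightarrow> x \<le> y \<Longrightarrow> u x \<le> u y"
  using u_inc by (cases "x = y") (auto intro: less_imp_le)

lemma u_le_iff: "wlow \<le> x \<Longrightarrow> wlow \<le> y \<Longrightarrow> u x \<le> u y \<longleftrightarrow> x \<le> y"
  using u_inc by (meson linorder_not_le u_mono)

lemma u'_dec: "wlow \<le> x \<Longrightarrow> x < y \<Longrightarrow> u' y < u' x"
  using mvt_within[OF _ _ u_d2, of x y] u''_neg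
  by (smt (verit, best) mult_neg_pos)

lemma tangent: assumes "wlow \<le> x" "wlow \<le> y" shows "u y \<le> u x + u' x * (y - x)"
proof (cases x y rule: linorder_cases)
  case less
  then obtain \<xi> where "x < \<xi>" "\<xi> < y" "u y - u x = u' \<xi> * (y - x)"
    using mvt_within[OF assms(1) less u_d1] by blast
  moreover have "u' \<xi> < u' x" using u'_dec assms \<open>x < \<xi>\<close> by auto
  ultimately show ?thesis using less by (smt (verit) mult_right_mono)
next
  case equal then show ?thesis by simp
next
  case greater
  then obtain \<xi> where "y < \<xi>" "\<xi> < x" "u x - u y = u' \<xi> * (x - y)"
    using mvt_within[OF assms(2) greater u_d1] by blast
  moreover have "u' x < u' \<xi>" using u'_dec assms \<open>y < \<xi>\<close> \<open>\<xi> < x\<close> by auto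
  then have "u' x * (x - y) \<le> u' \<xi> * (x - y)" using greater by (intro mult_right_mono) auto
  ultimately show ?thesis by (simp add: algebra_simps)
qed

lemma u_cont: "continuous_on {wlow..} u"
  using u_d1 by (metis DERIV_continuous atLeast_iff continuous_on_eq_continuous_within)

end




lemma rate_lt:
  assumes "n > 0" "0 \<le> p" "ereal (1 / real n) * eln p < ereal r"
  shows "p < exp (real n * r)"
proof (cases "p \<le> 0")
  case True then show ?thesis using assms(2) by simp
next
  case False
  then have "ereal (1 / real n) * eln p = ereal (ln p / real n)" by (simp add: eln_def)
  with assms have "ln p / real n < r" by simp
  then have "ln p < real n * r" using assms(1) by (simp add: divide_less_eq mult.commute)
  then show ?thesis using False by (metis exp_less_mono exp_ln not_le)
qed

lemma rate_gt:
  assumes "n > 0" "ereal r < ereal (1 / real n) * eln p"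
  shows "exp (real n * r) < p"
proof (cases "p \<le> 0")
  case True
  then have "ereal (1 / real n) * eln p = - \<infinity>" using assms(1) by (simp add: eln_def)
  then show ?thesis using assms by simp
next
  case False
  then have "ereal (1 / real n) * eln p = ereal (ln p / real n)" by (simp add: eln_def)
  with assms have "r < ln p / real n" by simp
  then have "real n * r < ln p" using assms(1) by (simp add: less_divide_eq mult.commute)
  then show ?thesis using False by (metis exp_less_mono exp_ln not_le)
qed

lemma eventually_exp_small:
  fixes c e :: real assumes "c < 0" "0 < e"
  shows "eventually (\<lambda>n. exp (real n * c) < e) sequentially"
proof -
  obtain N :: nat where N: "ln e / c < real N" using reals_Archimedean2 by blast
  show ?thesis unfolding eventually_sequentially
  proof (intro exI allI impI)
    fix n assume "N \<le> n"
    then have "ln e / c < real n" using N by linarith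
    then have "real n * c < ln e" using assms(1) by (simp add: divide_less_eq mult.commute)
    then show "exp (real n * c) < e" using assms(2) by (metis exp_less_mono exp_ln)
  qed
qed

locale ld =
  fixes A :: "'a set" and astar :: 'a
    and nu :: "'z measure" and g :: "nat \<Rightarrow> 'a \<Rightarrow> 'z \<Rightarrow> real"
    and I :: "'a \<Rightarrow> 'a \<Rightarrow> real \<Rightarrow> ereal" and Lhat :: "'a \<Rightarrow> 'a \<Rightarrow> real"
  assumes finA: "finite A" and astarA: "astar \<in> A"
    and g_meas: "\<And>n a. a \<in> A \<Longrightarrow> g n a \<in> borel_measurable nu"
    and g_nonneg: "\<And>n a z. a \<in> A \<Longrightarrow> z \<in> space nu \<Longrightarrow> 0 \<le> g n a z"
    and g_prob: "\<And>n a. a \<in> A \<Longrightarrow> prob_space (mon nu g n a)"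
    and score_wd: "\<And>n a a'. a \<in> A \<Longrightarrow> a' \<in> A \<Longrightarrow> a' \<noteq> astar \<Longrightarrow>
        AE z in mon nu g n a. 0 < g n astar z \<and> 0 < g n a' z"
    and LD: "\<And>a a' B. a \<in> A \<Longrightarrow> a' \<in> A \<Longrightarrow> a' \<noteq> astar \<Longrightarrow> B \<in> sets borel \<Longrightarrow>
        - (INF l \<in> interior B. I a a' l) \<le> liminf (ld_rate nu g astar a a' B) \<and>
        limsup (ld_rate nu g astar a a' B) \<le> - (INF l \<in> closure B. I a a' l)"
    and I_nonneg: "\<And>a a' l. a \<in> A \<Longrightarrow> a' \<in> A \<Longrightarrow> a' \<noteq> astar \<Longrightarrow> 0 \<le> I a a' l"
    and Lhat_min: "\<And>a a' l. a \<in> A \<Longrightarrow> a' \<in> A \<Longrightarrow> a' \<noteq> astar \<Longrightarrow>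
        I a a' (Lhat a a') \<le> I a a' l"
    and Lhat_unique: "\<And>a a' l. a \<in> A \<Longrightarrow> a' \<in> A \<Longrightarrow> a' \<noteq> astar \<Longrightarrow>
        (\<forall>l'. I a a' l \<le> I a a' l') \<Longrightarrow> l = Lhat a a'"
    and ident: "\<And>a b a'. a \<in> A \<Longrightarrow> b \<in> A \<Longrightarrow> a' \<in> A \<Longrightarrow> a' \<noteq> astar \<Longrightarrow>
        a \<noteq> b \<Longrightarrow> Lhat a a' \<noteq> Lhat b a'"
    and level_compact: "\<And>a a' t. a \<in> A \<Longrightarrow> a' \<in> A \<Longrightarrow> a' \<noteq> astar \<Longrightarrow>
        compact {l. I a a' l \<le> ereal t}"
    and cont1: "\<And>a'. a' \<in> A \<Longrightarrow> a' \<noteq> astar \<Longrightarrow> isCont (I astar a') (Lhat a' a')"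
begin

abbreviation "M n a \<equiv> mon nu g n a"
abbreviation "sc n a \<equiv> score g astar n a"
definition "Ev n a B = {z \<in> space nu. sc n a z \<in> B}"

lemma space_M[simp]: "space (M n a) = space nu" by (simp add: mon_def)
lemma sets_M[simp]: "sets (M n a) = sets nu" by (simp add: mon_def)

lemma sc_meas: "a \<in> A \<Longrightarrow> sc n a \<in> borel_measurable nu"
  unfolding score_def using g_meas[of astar n] g_meas[of a n] astarA by measurable

lemma Ev_sets: "a \<in> A \<Longrightarrow> B \<in> sets borel \<Longrightarrow> Ev n a B \<in> sets nu"
  using measurable_sets[OF sc_meas[of a n], of B] by (simp add: Ev_def Int_def conj_commute vimage_def)

lemma ld_rate_Ev: "ld_rate nu g astar a a' B n = ereal (1 / real n) * eln (measure (M n a) (Ev n a' B))"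
  by (simp add: ld_rate_def Ev_def)

lemma LD_up:
  assumes "a \<in> A" "a' \<in> A" "a' \<noteq> astar" "B \<in> sets borel"
    and "\<And>l. l \<in> closure B \<Longrightarrow> ereal t \<le> I a a' l" and "- t < r"
  shows "eventually (\<lambda>n. measure (M n a) (Ev n a' B) < exp (real n * r)) sequentially"
proof -
  have "ereal t \<le> (INF l \<in> closure B. I a a' l)" using assms(5) by (auto intro: INF_greatest)
  then have "- (INF l \<in> closure B. I a a' l) \<le> - ereal t" by (simp only: ereal_minus_le_minus)
  also have "\<dots> < ereal r" using assms(6) by simp
  finally have "- (INF l \<in> closure B. I a a' l) < ereal r" .
  then have "limsup (ld_rate nu g astar a a' B) < ereal r" using LD[OF assms(1-4)] by (meson le_less_trans)
  then have "eventually (\<lambda>n. ld_rate nu g astar a a' B n < ereal r) sequentially" by (rule Limsup_lessD)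
  moreover have "eventually (\<lambda>n. n > (0::nat)) sequentially" by (rule eventually_gt_at_top)
  ultimately show ?thesis
    by eventually_elim (auto intro: rate_lt simp: ld_rate_Ev)
qed

lemma LD_low:
  assumes "a \<in> A" "a' \<in> A" "a' \<noteq> astar" "B \<in> sets borel"
    and "l0 \<in> interior B" "I a a' l0 < ereal t" and "r < - t"
  shows "eventually (\<lambda>n. exp (real n * r) < measure (M n a) (Ev n a' B)) sequentially"
proof -
  have "(INF l \<in> interior B. I a a' l) < ereal t" using assms(5,6) by (meson INF_lower le_less_trans)
  then have "- ereal t < - (INF l \<in> interior B. I a a' l)" by (simp only: ereal_minus_less_minus)
  moreover have "ereal r < - ereal t" using assms(7) by simp
  ultimately have "ereal r < - (INF l \<in> interior B. I a a' l)" by (rule order.strict_trans[rotated])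
  then have "ereal r < liminf (ld_rate nu g astar a a' B)" using LD[OF assms(1-4)] by (meson less_le_trans)
  then have "eventually (\<lambda>n. ereal r < ld_rate nu g astar a a' B n) sequentially" by (rule less_LiminfD)
  moreover have "eventually (\<lambda>n. n > (0::nat)) sequentially" by (rule eventually_gt_at_top)
  ultimately show ?thesis
    by eventually_elim (auto intro: rate_gt simp: ld_rate_Ev)
qed

lemma prob_M: "a \<in> A \<Longrightarrow> prob_space (M n a)" by (rule g_prob)

lemma I_zero:
  assumes "a \<in> A" "a' \<in> A" "a' \<noteq> astar"
  shows "I a a' (Lhat a a') = 0"
proof -
  have ev: "eventually (\<lambda>n. 0 \<le> ld_rate nu g astar a a' UNIV n) sequentially"
    using eventually_gt_at_top[of "0::nat"]
  proof eventually_elim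
    case (elim n)
    interpret prob_space "M n a" using prob_M assms(1) .
    have "Ev n a' UNIV = space (M n a)" by (simp add: Ev_def)
    then have "measure (M n a) (Ev n a' UNIV) = 1" by (metis prob_space)
    then show ?case by (simp add: ld_rate_Ev eln_def)
  qed
  have "0 \<le> limsup (ld_rate nu g astar a a' UNIV)"
    by (rule le_Limsup[OF _ ev]) simp
  also have "\<dots> \<le> - (INF l \<in> closure UNIV. I a a' l)" using LD[OF assms, of UNIV] by simp
  finally have "(INF l. I a a' l) \<le> 0" by (simp add: ereal_uminus_le_reorder)
  moreover have "I a a' (Lhat a a') \<le> (INF l. I a a' l)"
    using Lhat_min[OF assms] by (auto intro: INF_greatest)
  ultimately show ?thesis using I_nonneg[OF assms, of "Lhat a a'"] by (meson antisym order_trans)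
qed

lemma I_pos:
  assumes "a \<in> A" "a' \<in> A" "a' \<noteq> astar" "closed F" "Lhat a a' \<notin> F"
  shows "\<exists>t>0. \<forall>l\<in>F. ereal t \<le> I a a' l"
proof (rule ccontr)
  assume "\<not> ?thesis"
  then have "\<forall>k::nat. \<exists>l\<in>F. I a a' l < ereal (1 / Suc k)"
    by (metis divide_pos_pos less_numeral_extra(1) not_le of_nat_0_less_iff zero_less_Suc)
  then obtain f where f: "\<And>k. f k \<in> F" "\<And>k. I a a' (f k) < ereal (1 / Suc k)" by metis
  have "f k \<in> {l. I a a' l \<le> ereal 1}" for k
  proof -
    have "ereal (1 / Suc k) \<le> ereal 1" by simp
    then show ?thesis using f(2)[of k] by (simp del: ereal_less_eq ereal_less)
  qed
  from compact_imp_seq_compact[OF level_compact[OF assms(1-3), of 1]] this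
  obtain l r where l: "strict_mono r" "(f \<circ> r) \<longlonglongrightarrow> l"
    unfolding seq_compact_def by blast
  have lF: "l \<in> F" using closed_sequentially[OF assms(4) _ l(2)] f(1) by auto
  have small: "I a a' l \<le> ereal (1 / Suc m)" for m
  proof -
    have cl: "closed {l. I a a' l \<le> ereal (1 / Suc m)}"
      using compact_imp_closed[OF level_compact[OF assms(1-3)]] .
    have "(\<lambda>k. (f \<circ> r) (k + m)) \<longlonglongrightarrow> l" using l(2) by (rule LIMSEQ_ignore_initial_segment)
    moreover have "(f \<circ> r) (k + m) \<in> {l. I a a' l \<le> ereal (1 / Suc m)}" for k
    proof -
      have "m \<le> r (k + m)" using seq_suble[OF l(1), of "k+m"] by simp
      then have "1 / real (Suc (r (k + m))) \<le> 1 / Suc m" by (simp add: frac_le)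
      then show ?thesis using f(2)[of "r (k+m)"] by (auto intro: order.trans less_imp_le)
    qed
    ultimately have "l \<in> {l. I a a' l \<le> ereal (1 / Suc m)}" by (rule closed_sequentially[OF cl, rotated])
    then show ?thesis by simp
  qed
  have "I a a' l \<le> 0"
  proof (rule ccontr)
    assume "\<not> I a a' l \<le> 0"
    then obtain e where e: "0 < ereal e" "ereal e < I a a' l" using ereal_dense2 by (meson not_le)
    then obtain m :: nat where "m > 0" "inverse (real m) < e" using ex_inverse_of_nat_less by force
    moreover have "1 / real (Suc m) \<le> inverse (real m)"
      using \<open>m > 0\<close> by (simp add: inverse_eq_divide frac_le)
    ultimately have "1 / real (Suc m) < e" by linarith
    then have "ereal (1 / real (Suc m)) < ereal e" by simp
    then have "I a a' l < ereal e" using small[of m] by (rule le_less_trans[rotated])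
    then show False using e(2) by simp
  qed
  then have "\<forall>l'. I a a' l \<le> I a a' l'" using I_nonneg[OF assms(1-3)] by (meson order_trans)
  then have "l = Lhat a a'" by (rule Lhat_unique[OF assms(1-3)])
  then show False using lF assms(5) by simp
qed

lemma Ev_compl: "Ev n a (- B) = space nu - Ev n a B" by (auto simp: Ev_def)

lemma conc:
  assumes "a \<in> A" "a \<noteq> astar" "0 < \<delta>" "0 < \<epsilon>"
  shows "eventually (\<lambda>n. 1 - \<epsilon> < measure (M n a) (Ev n a {Lhat a a - \<delta> <..< Lhat a a + \<delta>})) sequentially"
proof -
  let ?U = "{Lhat a a - \<delta> <..< Lhat a a + \<delta>}"
  have clF: "closed (- ?U)" by (simp add: closed_Compl)
  have nF: "Lhat a a \<notin> - ?U" using assms(3) by simp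
  obtain t where t: "t > 0" "\<And>l. l \<in> - ?U \<Longrightarrow> ereal t \<le> I a a l"
    using I_pos[OF assms(1) assms(1) assms(2) clF nF] by blast
  have ev1: "eventually (\<lambda>n. measure (M n a) (Ev n a (- ?U)) < exp (real n * (- t / 2))) sequentially"
    by (rule LD_up[OF assms(1) assms(1) assms(2)]) (use t clF in \<open>auto simp: borel_closed closure_closed\<close>)
  have ev2: "eventually (\<lambda>n. exp (real n * (- t / 2)) < \<epsilon>) sequentially"
    by (rule eventually_exp_small) (use t assms in auto)
  from ev1 ev2 show ?thesis
  proof eventually_elim
    case (elim n)
    interpret prob_space "M n a" using prob_M assms(1) .
    have "Ev n a ?U \<in> events" using Ev_sets[OF assms(1)] by simp
    then have "prob (space (M n a) - Ev n a ?U) = 1 - prob (Ev n a ?U)" by (rule prob_compl)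
    then have "prob (Ev n a (- ?U)) = 1 - prob (Ev n a ?U)" by (simp add: Ev_compl)
    then show ?case using elim by linarith
  qed
qed

lemma em_M:
  assumes "a \<in> A" "E \<in> sets nu"
  shows "emeasure (M n a) E = (\<integral>\<^sup>+z. ennreal (g n a z * indicator E z) \<partial>nu)"
proof -
  have [measurable]: "g n a \<in> borel_measurable nu" using g_meas[OF assms(1)] .
  show ?thesis unfolding mon_def
    by (subst emeasure_density) (auto intro!: nn_integral_cong simp: assms(2) indicator_def)
qed

lemma meas_M: assumes "a \<in> A" shows "emeasure (M n a) E = ennreal (measure (M n a) E)"
proof -
  interpret prob_space "M n a" using prob_M[OF assms] .
  show ?thesis by (rule emeasure_eq_measure)
qed

lemma cmult_int:
  assumes "a \<in> A" "0 \<le> k" "E \<in> sets nu"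
  shows "(\<integral>\<^sup>+z. ennreal (k * (g n a z * indicator E z)) \<partial>nu) = ennreal k * emeasure (M n a) E"
proof -
  have [measurable]: "g n a \<in> borel_measurable nu" using g_meas[OF assms(1)] .
  have "(\<integral>\<^sup>+z. ennreal (k * (g n a z * indicator E z)) \<partial>nu) =
        (\<integral>\<^sup>+z. ennreal k * ennreal (g n a z * indicator E z) \<partial>nu)"
    by (intro nn_integral_cong) (simp add: ennreal_mult assms g_nonneg)
  also have "\<dots> = ennreal k * (\<integral>\<^sup>+z. ennreal (g n a z * indicator E z) \<partial>nu)"
    by (rule nn_integral_cmult) (use assms(3) in measurable)
  finally show ?thesis using em_M[OF assms(1,3)] by simp
qed

lemma CM1:
  assumes "a \<in> A" "a \<noteq> astar" "n > 0" "E \<in> sets nu" "\<And>z. z \<in> E \<Longrightarrow> x \<le> sc n a z"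
  shows "exp (real n * x) * measure (M n a) E \<le> measure (M n astar) E"
proof -
  have "AE z in M n a. 0 < g n astar z \<and> 0 < g n a z" using score_wd[OF assms(1) assms(1) assms(2)] .
  then have ae: "AE z in nu. 0 < ennreal (g n a z) \<longrightarrow> 0 < g n astar z \<and> 0 < g n a z"
    unfolding mon_def using g_meas[OF assms(1)] by (subst (asm) AE_density) auto
  have "AE z in nu. ennreal (exp (real n * x) * (g n a z * indicator E z)) \<le> ennreal (g n astar z * indicator E z)"
    using ae
  proof eventually_elim
    case (elim z)
    show ?case
    proof (cases "z \<in> E \<and> 0 < g n a z")
      case True
      then have pos: "0 < g n astar z" "0 < g n a z" using elim by auto
      have "x \<le> ln (g n astar z / g n a z) / real n" using assms(5) True by (simp add: score_def)
      then have "real n * x \<le> ln (g n astar z / g n a z)" using assms(3) by (simp add: le_divide_eq mult.commute)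
      then have "exp (real n * x) \<le> g n astar z / g n a z" using pos
        by (metis divide_pos_pos exp_le_cancel_iff exp_ln)
      then have "exp (real n * x) * g n a z \<le> g n astar z" using pos by (simp add: le_divide_eq)
      then show ?thesis using True by (simp add: ennreal_leI)
    next
      case False
      then have "g n a z * indicator E z \<le> 0" by (auto simp: indicator_def)
      then have "exp (real n * x) * (g n a z * indicator E z) \<le> 0" by (simp add: mult_nonneg_nonpos)
      then show ?thesis by (simp add: ennreal_neg)
    qed
  qed
  then have "(\<integral>\<^sup>+z. ennreal (exp (real n * x) * (g n a z * indicator E z)) \<partial>nu)
      \<le> (\<integral>\<^sup>+z. ennreal (g n astar z * indicator E z) \<partial>nu)" by (rule nn_integral_mono_AE)
  then have "ennreal (exp (real n * x)) * emeasure (M n a) E \<le> emeasure (M n astar) E"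
    using cmult_int[OF assms(1) _ assms(4)] em_M[OF astarA assms(4)] by simp
  then have "ennreal (exp (real n * x) * measure (M n a) E) \<le> ennreal (measure (M n astar) E)"
    using meas_M[OF assms(1)] meas_M[OF astarA] by (simp add: ennreal_mult)
  then show ?thesis by (simp add: ennreal_le_iff)
qed

lemma CM2:
  assumes "a \<in> A" "a \<noteq> astar" "n > 0" "E \<in> sets nu" "\<And>z. z \<in> E \<Longrightarrow> sc n a z \<le> x"
  shows "measure (M n astar) E \<le> exp (real n * x) * measure (M n a) E"
proof -
  have "AE z in M n astar. 0 < g n astar z \<and> 0 < g n a z" using score_wd[OF astarA assms(1) assms(2)] .
  then have ae: "AE z in nu. 0 < ennreal (g n astar z) \<longrightarrow> 0 < g n astar z \<and> 0 < g n a z"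
    unfolding mon_def using g_meas[OF astarA] by (subst (asm) AE_density) auto
  have "AE z in nu. ennreal (g n astar z * indicator E z) \<le> ennreal (exp (real n * x) * (g n a z * indicator E z))"
    using ae
  proof eventually_elim
    case (elim z)
    show ?case
    proof (cases "z \<in> E \<and> 0 < g n astar z")
      case True
      then have pos: "0 < g n astar z" "0 < g n a z" using elim by auto
      have "ln (g n astar z / g n a z) / real n \<le> x" using assms(5) True by (simp add: score_def)
      then have "ln (g n astar z / g n a z) \<le> real n * x" using assms(3) by (simp add: divide_le_eq mult.commute)
      then have "g n astar z / g n a z \<le> exp (real n * x)" using pos
        by (metis divide_pos_pos exp_le_cancel_iff exp_ln)
      then have "g n astar z \<le> exp (real n * x) * g n a z" using pos by (simp add: divide_le_eq)
      then show ?thesis using True by (simp add: ennreal_leI)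
    next
      case False
      then have "g n astar z * indicator E z \<le> 0" by (auto simp: indicator_def)
      then show ?thesis by (simp add: ennreal_neg)
    qed
  qed
  then have "(\<integral>\<^sup>+z. ennreal (g n astar z * indicator E z) \<partial>nu)
      \<le> (\<integral>\<^sup>+z. ennreal (exp (real n * x) * (g n a z * indicator E z)) \<partial>nu)" by (rule nn_integral_mono_AE)
  then have "emeasure (M n astar) E \<le> ennreal (exp (real n * x)) * emeasure (M n a) E"
    using cmult_int[OF assms(1) _ assms(4)] em_M[OF astarA assms(4)] by simp
  then have "ennreal (measure (M n astar) E) \<le> ennreal (exp (real n * x) * measure (M n a) E)"
    using meas_M[OF assms(1)] meas_M[OF astarA] by (simp add: ennreal_mult)
  then show ?thesis by (simp add: ennreal_le_iff)
qed

lemma prob_le1: "a \<in> A \<Longrightarrow> measure (M n a) E \<le> 1"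
  using prob_M prob_space.prob_le_1 by blast

lemma I_rate:
  assumes a: "a \<in> A" "a \<noteq> astar"
  shows "I astar a (Lhat a a) = ereal (- Lhat a a)"
proof (rule antisym)
  define la where "la = Lhat a a"
  show "I astar a (Lhat a a) \<le> ereal (- Lhat a a)"
  proof (rule ccontr)
    assume "\<not> ?thesis"
    then have "ereal (- la) < I astar a la" by (simp add: la_def)
    then obtain r where r: "ereal (- la) < ereal r" "ereal r < I astar a la" using ereal_dense2 by blast
    have "((I astar a) \<longlongrightarrow> I astar a la) (at la)" using cont1[OF a] by (simp add: la_def isCont_def)
    from order_tendstoD(1)[OF this r(2)]
    obtain d where d: "d > 0" "\<And>x. x \<noteq> la \<Longrightarrow> dist x la < d \<Longrightarrow> ereal r < I astar a x"
      unfolding eventually_at by auto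
    have rl: "0 < r + la" using r(1) by simp
    define \<delta> where "\<delta> = min (d/2) ((r + la) / 4)"
    have \<delta>: "0 < \<delta>" "\<delta> < d" "\<delta> \<le> (r + la) / 4" using d(1) rl unfolding \<delta>_def min_def by auto
    let ?C = "{la - \<delta> .. la + \<delta>}" and ?U = "{la - \<delta> <..< la + \<delta>}"
    have Cb: "\<And>l. l \<in> closure ?C \<Longrightarrow> ereal r \<le> I astar a l"
    proof -
      fix l assume "l \<in> closure ?C"
      then have "l \<in> ?C" by simp
      show "ereal r \<le> I astar a l"
      proof (cases "l = la")
        case True then show ?thesis using r(2) by simp
      next
        case False
        have "dist l la < d" using \<open>l \<in> ?C\<close> \<delta> by (auto simp: dist_real_def abs_le_iff)
        then show ?thesis using d(2)[OF False] by simp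
      qed
    qed
    have ev1: "eventually (\<lambda>n. measure (M n astar) (Ev n a ?C) < exp (real n * (- r + \<delta>))) sequentially"
      by (rule LD_up[OF astarA a(1) a(2) _ Cb]) (use \<delta> in auto)
    have ev2: "eventually (\<lambda>n. 1 - 1/2 < measure (M n a) (Ev n a ?U)) sequentially"
      using conc[OF a \<delta>(1), of "1/2"] by (simp add: la_def)
    have ev3: "eventually (\<lambda>n. exp (real n * (2 * \<delta> - r - la)) < 1/2) sequentially"
      by (rule eventually_exp_small) (use \<delta> rl in auto)
    have "eventually (\<lambda>n. False) sequentially"
      using ev1 ev2 ev3 eventually_gt_at_top[of "0::nat"]
    proof eventually_elim
      case (elim n)
      have "exp (real n * (la - \<delta>)) * (1/2) \<le> exp (real n * (la - \<delta>)) * measure (M n a) (Ev n a ?U)"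
        using elim(2) by (intro mult_left_mono) auto
      also have "exp (real n * (la - \<delta>)) * measure (M n a) (Ev n a ?U) \<le> measure (M n astar) (Ev n a ?U)"
        by (rule CM1[OF a elim(4) Ev_sets[OF a(1)]]) (auto simp: Ev_def)
      also have "\<dots> \<le> measure (M n astar) (Ev n a ?C)"
        using prob_M[OF astarA] Ev_sets[OF a(1), of ?C n]
        by (intro finite_measure.finite_measure_mono prob_space.finite_measure) (auto simp: Ev_def)
      also have "\<dots> < exp (real n * (- r + \<delta>))" by (rule elim(1))
      finally have "exp (real n * (la - \<delta>)) * (1/2) < exp (real n * (- r + \<delta>))" .
      then have "1/2 < exp (real n * (- r + \<delta>)) / exp (real n * (la - \<delta>))"
        by (simp add: pos_less_divide_eq mult.commute)
      also have "\<dots> = exp (real n * (2 * \<delta> - r - la))" by (simp add: exp_diff[symmetric] algebra_simps)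
      finally show ?case using elim(3) by simp
    qed
    then show False by simp
  qed
next
  define la where "la = Lhat a a"
  show "ereal (- Lhat a a) \<le> I astar a (Lhat a a)"
  proof (rule ccontr)
    assume "\<not> ?thesis"
    then have "I astar a la < ereal (- la)" by (simp add: la_def)
    then obtain t where t: "I astar a la < ereal t" "ereal t < ereal (- la)" using ereal_dense2 by blast
    define \<delta> where "\<delta> = (- la - t) / 2"
    have \<delta>: "0 < \<delta>" using t(2) by (simp add: \<delta>_def)
    let ?U = "{la - \<delta> <..< la + \<delta>}"
    have ev1: "eventually (\<lambda>n. exp (real n * (la + 3 * \<delta> / 2)) < measure (M n astar) (Ev n a ?U)) sequentially"
      by (rule LD_low[OF astarA a(1) a(2) _ _ t(1)]) (use \<delta> t(2) in \<open>auto simp: \<delta>_def interior_open field_simps\<close>)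
    have "eventually (\<lambda>n. False) sequentially"
      using ev1 eventually_gt_at_top[of "0::nat"]
    proof eventually_elim
      case (elim n)
      have "measure (M n astar) (Ev n a ?U) \<le> exp (real n * (la + \<delta>)) * measure (M n a) (Ev n a ?U)"
        by (rule CM2[OF a elim(2) Ev_sets[OF a(1)]]) (auto simp: Ev_def)
      also have "\<dots> \<le> exp (real n * (la + \<delta>))" using prob_le1[OF a(1)] by simp
      finally have "exp (real n * (la + 3 * \<delta> / 2)) < exp (real n * (la + \<delta>))" using elim(1) by linarith
      then have "real n * (la + 3 * \<delta> / 2) < real n * (la + \<delta>)" by simp
      then show ?case using elim(2) \<delta> by (simp add: algebra_simps)
    qed
    then show False by simp
  qed
qed

lemma lam_neg:
  assumes a: "a \<in> A" "a \<noteq> astar"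
  shows "Lhat a a < 0"
proof -
  have "I astar a (Lhat a a) \<noteq> 0"
  proof
    assume "I astar a (Lhat a a) = 0"
    then have "\<forall>l'. I astar a (Lhat a a) \<le> I astar a l'" using I_nonneg[OF astarA a] by simp
    then have "Lhat a a = Lhat astar a" by (rule Lhat_unique[OF astarA a])
    then show False using ident[OF a(1) astarA a(1) a(2) a(2)] by simp
  qed
  moreover have "0 \<le> I astar a (Lhat a a)" using I_nonneg[OF astarA a] .
  ultimately show ?thesis using I_rate[OF a] by simp
qed

end



locale setting = ld A astar nu g I Lhat + ufacts wlow u u' u''
  for A :: "'a set" and astar :: 'a and nu :: "'z measure" and g :: "nat \<Rightarrow> 'a \<Rightarrow> 'z \<Rightarrow> real"
    and I :: "'a \<Rightarrow> 'a \<Rightarrow> real \<Rightarrow> ereal" and Lhat :: "'a \<Rightarrow> 'a \<Rightarrow> real"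
    and wlow :: real and u u' u'' :: "real \<Rightarrow> real" +
  fixes c :: "'a \<Rightarrow> real"
  assumes c_range: "c ` A \<subseteq> interior (u ` {wlow..})"
    and c_some: "\<exists>a\<in>A. c a < c astar"
    and c_distinct: "\<And>a. a \<in> A \<Longrightarrow> a \<noteq> astar \<Longrightarrow> c a \<noteq> c astar"
begin

definition "cs = c astar"
definition "ul = u wlow"
definition "wstar = inv_into {wlow..} u cs"
definition "Am = {a \<in> A. c a < cs}"

lemma Am_sub: "a \<in> Am \<Longrightarrow> a \<in> A \<and> a \<noteq> astar \<and> c a < cs"
  by (auto simp: Am_def cs_def)

lemma Am_fin: "finite Am" using finA by (simp add: Am_def)
lemma Am_ne: "Am \<noteq> {}" using c_some by (auto simp: Am_def cs_def)

lemma in_range: "a \<in> A \<Longrightarrow> c a \<in> u ` {wlow..}"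
  using c_range interior_subset by blast

lemma inv_u: assumes "y \<in> u ` {wlow..}"
  shows "wlow \<le> inv_into {wlow..} u y" "u (inv_into {wlow..} u y) = y"
  using assms inv_into_into[OF assms] f_inv_into_f[OF assms] by auto

lemma interior_gt: assumes "y \<in> interior (u ` {wlow..})" shows "ul < y"
proof -
  obtain e where e: "e > 0" "ball y e \<subseteq> u ` {wlow..}" using assms mem_interior by blast
  then have "y - e/2 \<in> u ` {wlow..}" by (auto simp: dist_real_def)
  then obtain w where "wlow \<le> w" "y - e/2 = u w" by auto
  then have "ul \<le> y - e/2" using u_mono[of wlow w] by (simp add: ul_def)
  then show ?thesis using e by simp
qed

lemma c_gt_ul: "a \<in> A \<Longrightarrow> ul < c a"
  using c_range interior_gt by blast

lemma wstar: "wlow \<le> wstar" "u wstar = cs" "wlow < wstar"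
proof -
  have r: "cs \<in> u ` {wlow..}" using in_range[OF astarA] by (simp add: cs_def)
  show 1: "wlow \<le> wstar" "u wstar = cs" using inv_u[OF r] by (auto simp: wstar_def)
  show "wlow < wstar"
  proof (rule ccontr)
    assume "\<not> wlow < wstar"
    then have "wstar = wlow" using 1 by simp
    then show False using c_gt_ul[OF astarA] 1 by (simp add: ul_def cs_def)
  qed
qed

lemma ul_lt_cs: "ul < cs" using c_gt_ul[OF astarA] by (simp add: cs_def)

lemma LB:
  assumes aAm: "a \<in> Am" and "0 < \<delta>"
  shows "\<exists>K>0. eventually (\<lambda>n. \<forall>w. admissible nu g A astar wlow u c n w \<longrightarrow>
            wstar + K * exp (real n * (Lhat a a - \<delta>)) \<le> (\<integral>z. w z \<partial>M n astar)) sequentially"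
proof -
  have aA: "a \<in> A" and ana: "a \<noteq> astar" and cac: "c a < cs" using Am_sub[OF aAm] by auto
  define D where "D = cs - c a"
  have D: "0 < D" using cac by (simp add: D_def)
  define k where "k = u' wstar"
  have k: "0 < k" using u'_pos wstar(1) by (simp add: k_def)
  define \<theta> where "\<theta> = cs - D / 4"
  obtain wa where wa: "wlow \<le> wa" "u wa = c a" using in_range[OF aA] by auto
  have "wa \<le> wstar" using u_le_iff[OF wa(1) wstar(1)] wa(2) wstar(2) cac by simp
  moreover have "continuous_on {wa..wstar} u" using u_cont by (rule continuous_on_subset) (use wa in auto)
  moreover have "u wa \<le> \<theta>" "\<theta> \<le> u wstar" using wa wstar D by (auto simp: \<theta>_def D_def field_simps)
  ultimately obtain w1 where w1: "wa \<le> w1" "w1 \<le> wstar" "u w1 = \<theta>" using IVT'[of u wa \<theta> wstar] by auto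
  have w1l: "wlow \<le> w1" using w1 wa by simp
  have w1s: "w1 < wstar" using w1 wstar D by (cases "w1 = wstar") (auto simp: \<theta>_def)
  obtain \<xi> where \<xi>: "w1 < \<xi>" "\<xi> < wstar" "u wstar - u w1 = u' \<xi> * (wstar - w1)"
    using mvt_within[OF w1l w1s u_d1] by blast
  have "k < u' \<xi>" using u'_dec[of \<xi> wstar] \<xi> w1l by (simp add: k_def)
  then have "k * (wstar - w1) < u' \<xi> * (wstar - w1)" using w1s by (intro mult_strict_right_mono) auto
  define \<beta> where "\<beta> = cs + k * (w1 - wstar) - \<theta>"
  have \<beta>: "0 < \<beta>" using \<xi>(3) wstar(2) w1(3) \<open>k * (wstar - w1) < u' \<xi> * (wstar - w1)\<close>
    by (simp add: \<beta>_def algebra_simps)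
  have kw1: "k \<le> u' w1" using u'_dec[OF w1l w1s] by (simp add: k_def)
  define Mg where "Mg = \<theta> - ul"
  have Mg: "0 < Mg" using c_gt_ul[OF aA] D by (simp add: Mg_def \<theta>_def D_def field_simps)
  define \<eta> where "\<eta> = D / (2 * Mg)"
  have \<eta>: "0 < \<eta>" using D Mg by (simp add: \<eta>_def)
  define K where "K = min (D / (4 * k)) (\<beta> * \<eta> / (2 * k))"
  have K: "0 < K" using D k \<beta> \<eta> by (simp add: K_def)
  have lneg: "Lhat a a - \<delta> < 0" using lam_neg[OF aA ana] \<open>0 < \<delta>\<close> by simp
  let ?U = "{Lhat a a - \<delta> <..< Lhat a a + \<delta>}"
  have ev: "eventually (\<lambda>n. 1 - \<eta>/2 < measure (M n a) (Ev n a ?U)) sequentially"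
    using conc[OF aA ana \<open>0 < \<delta>\<close>, of "\<eta>/2"] \<eta> by simp
  have "eventually (\<lambda>n. \<forall>w. admissible nu g A astar wlow u c n w \<longrightarrow>
            wstar + K * exp (real n * (Lhat a a - \<delta>)) \<le> (\<integral>z. w z \<partial>M n astar)) sequentially"
    using ev eventually_gt_at_top[of "0::nat"]
  proof eventually_elim
    case (elim n)
    show ?case
    proof (intro allI impI)
      fix w assume adm: "admissible nu g A astar wlow u c n w"
      have wm[measurable]: "w \<in> borel_measurable nu" and wl: "\<And>z. z \<in> space nu \<Longrightarrow> wlow \<le> w z"
        and iw: "integrable (M n astar) w"
        and iua: "integrable (M n a) (\<lambda>z. u (w z))" and ius: "integrable (M n astar) (\<lambda>z. u (w z))"
        and ic: "(\<integral>z. u (w z) \<partial>M n astar) - c astar \<ge> (\<integral>z. u (w z) \<partial>M n a) - c a"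
        and ir: "(\<integral>z. u (w z) \<partial>M n astar) - c astar \<ge> 0"
        using adm aA astarA unfolding admissible_def by auto
      interpret Ps: prob_space "M n astar" using prob_M[OF astarA] .
      interpret Pa: prob_space "M n a" using prob_M[OF aA] .
      have sps: "measure (M n astar) (space nu) = 1" using Ps.prob_space by simp
      have spa: "measure (M n a) (space nu) = 1" using Pa.prob_space by simp
      define Q where "Q = {z \<in> space nu. w z \<le> w1}"
      have Qs: "Q \<in> sets nu" unfolding Q_def by measurable
      define G where "G = (\<integral>z. w z \<partial>M n astar) - wstar"
      have iQs: "integrable (M n astar) (indicator Q :: 'z \<Rightarrow> real)" using Qs by (intro integrable_real_indicator) (auto simp: Ps.emeasure_eq_measure)
      have iQa: "integrable (M n a) (indicator Q :: 'z \<Rightarrow> real)" using Qs by (intro integrable_real_indicator) (auto simp: Pa.emeasure_eq_measure)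
      have pt1: "u (w z) + \<beta> * indicator Q z \<le> cs + k * (w z - wstar)" if z: "z \<in> space nu" for z
      proof (cases "z \<in> Q")
        case True
        then have "w z \<le> w1" by (simp add: Q_def)
        have "u (w z) \<le> u w1 + u' w1 * (w z - w1)" using tangent[OF w1l wl[OF z]] .
        moreover have "(k - u' w1) * (w z - w1) \<ge> 0"
          using kw1 \<open>w z \<le> w1\<close> by (intro mult_nonpos_nonpos) auto
        ultimately show ?thesis using True w1(3) by (simp add: \<beta>_def algebra_simps)
      next
        case False
        have "u (w z) \<le> u wstar + u' wstar * (w z - wstar)" using tangent[OF wstar(1) wl[OF z]] .
        then show ?thesis using False wstar(2) by (simp add: k_def)
      qed
      have "(\<integral>z. u (w z) + \<beta> * indicator Q z \<partial>M n astar) \<le> (\<integral>z. cs + k * (w z - wstar) \<partial>M n astar)"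
        using pt1 ius iQs iw by (intro integral_mono) auto
      moreover have "(\<integral>z. u (w z) + \<beta> * indicator Q z \<partial>M n astar) = (\<integral>z. u (w z) \<partial>M n astar) + \<beta> * measure (M n astar) Q"
        using ius iQs Qs by (simp add: Int_absorb2 sets.sets_into_space)
      moreover have "(\<integral>z. cs + k * (w z - wstar) \<partial>M n astar) = cs + k * G"
        using iw by (simp add: G_def algebra_simps sps)
      ultimately have A1: "(\<integral>z. u (w z) \<partial>M n astar) + \<beta> * measure (M n astar) Q \<le> cs + k * G" by simp
      have pt2: "\<theta> - Mg * indicator Q z \<le> u (w z)" if z: "z \<in> space nu" for z
      proof (cases "z \<in> Q")
        case True
        then show ?thesis using u_mono[OF order.refl wl[OF z]] by (simp add: Mg_def ul_def)
      next
        case False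
        then have "w1 < w z" using z by (simp add: Q_def)
        then show ?thesis using u_inc[OF w1l] w1(3) False by force
      qed
      have "(\<integral>z. \<theta> - Mg * indicator Q z \<partial>M n a) \<le> (\<integral>z. u (w z) \<partial>M n a)"
        using pt2 iua iQa by (intro integral_mono) auto
      moreover have "(\<integral>z. \<theta> - Mg * indicator Q z \<partial>M n a) = \<theta> - Mg * measure (M n a) Q"
        using iQa Qs by (simp add: Int_absorb2 sets.sets_into_space spa)
      ultimately have A2: "\<theta> - Mg * measure (M n a) Q \<le> (\<integral>z. u (w z) \<partial>M n a)" by simp
      have GQ: "\<beta> * measure (M n astar) Q \<le> k * G" using A1 ir by (simp add: cs_def)
      have A3: "3 * D / 4 - k * G \<le> Mg * measure (M n a) Q"
      proof -
        have "0 \<le> \<beta> * measure (M n astar) Q" using \<beta> by simp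
        then show ?thesis using A1 A2 ic unfolding D_def \<theta>_def cs_def by argo
      qed
      have expl: "exp (real n * (Lhat a a - \<delta>)) \<le> 1" using lneg by (simp add: mult_nonneg_nonpos)
      show "wstar + K * exp (real n * (Lhat a a - \<delta>)) \<le> (\<integral>z. w z \<partial>M n astar)"
      proof (cases "D / 4 \<le> k * G")
        case True
        then have "D / (4 * k) \<le> G" using k by (simp add: field_simps)
        moreover have "K * exp (real n * (Lhat a a - \<delta>)) \<le> K" using expl K by (simp add: mult_le_cancel_left1)
        moreover have "K \<le> D / (4 * k)" by (simp add: K_def)
        ultimately show ?thesis by (simp add: G_def)
      next
        case False
        then have "D / 2 \<le> Mg * measure (M n a) Q" using A3 by simp
        then have PQ: "\<eta> \<le> measure (M n a) Q" using Mg by (simp add: \<eta>_def field_simps)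
        let ?E = "Ev n a ?U"
        have Es: "?E \<in> sets nu" using Ev_sets[OF aA] by simp
        have "Q \<subseteq> (Q \<inter> ?E) \<union> (space nu - ?E)" using Qs sets.sets_into_space by auto
        then have "measure (M n a) Q \<le> measure (M n a) ((Q \<inter> ?E) \<union> (space nu - ?E))"
          using Qs Es by (intro Pa.finite_measure_mono) auto
        also have "\<dots> \<le> measure (M n a) (Q \<inter> ?E) + measure (M n a) (space nu - ?E)"
          using Qs Es by (intro measure_subadditive) (auto simp: Pa.emeasure_eq_measure)
        also have "measure (M n a) (space nu - ?E) = 1 - measure (M n a) ?E"
          using Pa.prob_compl[of ?E] Es by simp
        finally have "\<eta> / 2 < measure (M n a) (Q \<inter> ?E)" using PQ elim(1) by linarith
        have "exp (real n * (Lhat a a - \<delta>)) * measure (M n a) (Q \<inter> ?E) \<le> measure (M n astar) (Q \<inter> ?E)"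
          by (rule CM1[OF aA ana elim(2)]) (use Qs Es in \<open>auto simp: Ev_def\<close>)
        also have "\<dots> \<le> measure (M n astar) Q" using Qs Es by (intro Ps.finite_measure_mono) auto
        finally have "exp (real n * (Lhat a a - \<delta>)) * (\<eta> / 2) \<le> measure (M n astar) Q"
          using \<open>\<eta> / 2 < measure (M n a) (Q \<inter> ?E)\<close>
          by (smt (verit) exp_gt_zero mult_left_mono)
        then have "\<beta> * (exp (real n * (Lhat a a - \<delta>)) * (\<eta> / 2)) \<le> k * G"
          using GQ \<beta> by (smt (verit) mult_left_mono)
        then have "(\<beta> * \<eta> / (2 * k)) * exp (real n * (Lhat a a - \<delta>)) \<le> G"
          using k by (simp add: field_simps)
        moreover have "K * exp (real n * (Lhat a a - \<delta>)) \<le> (\<beta> * \<eta> / (2 * k)) * exp (real n * (Lhat a a - \<delta>))"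
          by (intro mult_right_mono) (auto simp: K_def)
        ultimately show ?thesis by (simp add: G_def)
      qed
    qed
  qed
  then show ?thesis using K by blast
qed

end



lemma ite_int:
  fixes C1 C2 :: real
  assumes "prob_space N" "S \<in> sets N"
  shows "integrable N (\<lambda>z. if z \<in> S then C1 else C2)"
    "(\<integral>z. (if z \<in> S then C1 else C2) \<partial>N) = C2 - (C2 - C1) * measure N S"
proof -
  interpret prob_space N by fact
  have eq: "(\<lambda>z. if z \<in> S then C1 else C2) = (\<lambda>z. C2 - (C2 - C1) * indicator S z)"
    by (auto simp: indicator_def fun_eq_iff)
  have ii: "integrable N (indicator S :: _ \<Rightarrow> real)"
    using assms(2) by (intro integrable_real_indicator) (auto simp: emeasure_eq_measure)
  show "integrable N (\<lambda>z. if z \<in> S then C1 else C2)" unfolding eq using ii by auto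
  have sp: "measure N (space N) = 1" by (rule prob_space)
  show "(\<integral>z. (if z \<in> S then C1 else C2) \<partial>N) = C2 - (C2 - C1) * measure N S"
    unfolding eq using ii assms(2) sp by (simp add: Int_absorb2 sets.sets_into_space)
qed

context setting begin

definition "Lam = Max ((\<lambda>a. Lhat a a) ` Am)"

lemma Lam_ge: "a \<in> Am \<Longrightarrow> Lhat a a \<le> Lam"
  unfolding Lam_def using Am_fin by (intro Max_ge) auto

lemma Lam_in: "\<exists>a\<in>Am. Lhat a a = Lam"
proof -
  have "Max ((\<lambda>a. Lhat a a) ` Am) \<in> (\<lambda>a. Lhat a a) ` Am" using Am_fin Am_ne by (intro Max_in) auto
  then obtain a where "a \<in> Am" "Max ((\<lambda>a. Lhat a a) ` Am) = Lhat a a" by auto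
  then show ?thesis by (auto simp: Lam_def)
qed

lemma UB:
  assumes "0 < \<delta>" "Lam + \<delta> < 0"
  shows "\<exists>K>0. eventually (\<lambda>n. \<exists>w. admissible nu g A astar wlow u c n w \<and> card (w ` space nu) = 2 \<and>
            (\<integral>z. w z \<partial>M n astar) \<le> wstar + K * exp (real n * (Lam + \<delta>))) sequentially"
proof -
  obtain e where e: "e > 0" "ball cs e \<subseteq> u ` {wlow..}"
    using c_range astarA mem_interior by (metis cs_def image_subset_iff)
  define H where "H = {a \<in> A. cs < c a}"
  have Hfin: "finite H" using finA by (simp add: H_def)
  define \<gamma> where "\<gamma> = Min (insert (min 1 (e/2)) ((\<lambda>a. c a - cs) ` H))"
  have \<gamma>pos: "0 < \<gamma>" unfolding \<gamma>_def using Hfin e by (subst Min_gr_iff) (auto simp: H_def)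
  have "\<gamma> \<le> min 1 (e/2)" unfolding \<gamma>_def using Hfin by (intro Min.coboundedI) auto
  then have \<gamma>1: "\<gamma> \<le> 1" "\<gamma> \<le> e/2" by auto
  have \<gamma>H: "\<And>a. a \<in> H \<Longrightarrow> cs + \<gamma> \<le> c a"
  proof -
    fix a assume "a \<in> H"
    then have "\<gamma> \<le> c a - cs" unfolding \<gamma>_def using Hfin by (intro Min.coboundedI) auto
    then show "cs + \<gamma> \<le> c a" by simp
  qed
  define \<epsilon> where "\<epsilon> = Min (insert 1 ((\<lambda>a. (c a - ul) / (cs + 1 - ul)) ` Am))"
  have csul: "0 < cs + 1 - ul" using ul_lt_cs by simp
  have \<epsilon>pos: "0 < \<epsilon>" unfolding \<epsilon>_def using Am_fin csul c_gt_ul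
    by (subst Min_gr_iff) (auto simp: Am_def)
  have \<epsilon>1: "\<epsilon> \<le> 1" unfolding \<epsilon>_def using Am_fin by (intro Min.coboundedI) auto
  have \<epsilon>A: "\<And>a. a \<in> Am \<Longrightarrow> (cs + 1 - ul) * \<epsilon> \<le> c a - ul"
  proof -
    fix a assume "a \<in> Am"
    then have "\<epsilon> \<le> (c a - ul) / (cs + 1 - ul)" unfolding \<epsilon>_def using Am_fin by (intro Min.coboundedI) auto
    then show "(cs + 1 - ul) * \<epsilon> \<le> c a - ul" using csul by (simp add: le_divide_eq mult.commute)
  qed
  have rg: "cs + \<gamma> \<in> u ` {wlow..}" using e \<gamma>1 \<gamma>pos by (intro subsetD[OF e(2)]) (auto simp: dist_real_def)
  define xmax where "xmax = inv_into {wlow..} u (cs + \<gamma>)"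
  have xmax: "wlow \<le> xmax" "u xmax = cs + \<gamma>" using inv_u[OF rg] by (auto simp: xmax_def)
  define p0 where "p0 = min (1/2) (\<gamma> / (2 * (cs - ul)))"
  have p0: "0 < p0" using \<gamma>pos ul_lt_cs by (simp add: p0_def)
  define N where "N = card Am"
  have N: "0 < N" using Am_fin Am_ne by (simp add: N_def card_gt_0_iff)
  define K where "K = 2 * (cs - ul) * N / u' xmax"
  have K: "0 < K" using N ul_lt_cs u'_pos[OF xmax(1)] by (simp add: K_def)
  have E1: "eventually (\<lambda>n. \<forall>a\<in>Am. 1 - \<epsilon> < measure (M n a) (Ev n a {Lhat a a - \<delta> <..< Lhat a a + \<delta>})) sequentially"
    using Am_fin by (rule eventually_ball_finite) (use conc Am_sub \<epsilon>pos assms(1) in blast)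
  have E2: "eventually (\<lambda>n. exp (real n * (Lam + \<delta>)) < p0 / N) sequentially"
    by (rule eventually_exp_small) (use assms p0 N in auto)
  have "eventually (\<lambda>n. \<exists>w. admissible nu g A astar wlow u c n w \<and> card (w ` space nu) = 2 \<and>
            (\<integral>z. w z \<partial>M n astar) \<le> wstar + K * exp (real n * (Lam + \<delta>))) sequentially"
    using E1 E2 eventually_gt_at_top[of "0::nat"]
  proof eventually_elim
    case (elim n)
    interpret Ps: prob_space "M n astar" using prob_M[OF astarA] .
    define S where "S = (\<Union>a\<in>Am. Ev n a {Lhat a a - \<delta> <..< Lhat a a + \<delta>})"
    have Ss[measurable]: "S \<in> sets nu" unfolding S_def using Am_fin Am_sub Ev_sets by auto
    have Ssp: "S \<subseteq> space nu" unfolding S_def by (auto simp: Ev_def)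
    define p where "p = measure (M n astar) S"
    have p0le: "0 \<le> p" by (simp add: p_def)
    have "p \<le> (\<Sum>a\<in>Am. measure (M n astar) (Ev n a {Lhat a a - \<delta> <..< Lhat a a + \<delta>}))"
      unfolding p_def S_def using Am_fin Am_sub Ev_sets
      by (intro measure_subadditive_finite) (auto simp: Ps.emeasure_eq_measure)
    also have "\<dots> \<le> (\<Sum>a\<in>Am. exp (real n * (Lam + \<delta>)))"
    proof (intro sum_mono)
      fix a assume aAm: "a \<in> Am"
      have aA: "a \<in> A" "a \<noteq> astar" using Am_sub[OF aAm] by auto
      have "measure (M n astar) (Ev n a {Lhat a a - \<delta> <..< Lhat a a + \<delta>})
          \<le> exp (real n * (Lhat a a + \<delta>)) * measure (M n a) (Ev n a {Lhat a a - \<delta> <..< Lhat a a + \<delta>})"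
        by (rule CM2[OF aA elim(3) Ev_sets[OF aA(1)]]) (auto simp: Ev_def)
      also have "\<dots> \<le> exp (real n * (Lhat a a + \<delta>))" using prob_le1[OF aA(1)] by simp
      also have "\<dots> \<le> exp (real n * (Lam + \<delta>))" using Lam_ge[OF aAm] by (simp add: mult_left_mono)
      finally show "measure (M n astar) (Ev n a {Lhat a a - \<delta> <..< Lhat a a + \<delta>}) \<le> exp (real n * (Lam + \<delta>))" .
    qed
    also have "\<dots> = N * exp (real n * (Lam + \<delta>))" by (simp add: N_def)
    finally have pN: "p \<le> N * exp (real n * (Lam + \<delta>))" .
    have pp0: "p < p0" using pN elim(2) N by (simp add: less_divide_eq mult.commute)
    then have p12: "p < 1/2" and p\<gamma>: "p < \<gamma> / (2 * (cs - ul))" by (auto simp: p0_def)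
    define xu where "xu = (cs - ul * p) / (1 - p)"
    have xu_eq: "xu - cs = p * (cs - ul) / (1 - p)" using p12 by (simp add: xu_def field_simps)
    have xu1: "xu * (1 - p) = cs - ul * p" using p12 by (simp add: xu_def)
    have xu_eq2: "xu - (xu - ul) * p = cs"
    proof -
      have "xu - (xu - ul) * p = xu * (1 - p) + ul * p" by (simp add: algebra_simps)
      then show ?thesis using xu1 by simp
    qed
    have "0 \<le> p * (cs - ul) / (1 - p)" using p0le p12 ul_lt_cs by (intro divide_nonneg_pos mult_nonneg_nonneg) auto
    then have xu_ge: "cs \<le> xu" using xu_eq by linarith
    have xu_le2: "xu - cs \<le> 2 * p * (cs - ul)"
    proof -
      have "p * (cs - ul) / (1 - p) \<le> p * (cs - ul) / (1/2)"
        using p12 p0le ul_lt_cs by (intro divide_left_mono) auto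
      then show ?thesis using xu_eq by simp
    qed
    have xu_le: "xu \<le> cs + \<gamma>"
    proof -
      have "2 * p * (cs - ul) \<le> \<gamma>" using p\<gamma> ul_lt_cs by (simp add: less_divide_eq algebra_simps)
      then show ?thesis using xu_le2 by simp
    qed
    have xurg: "xu \<in> u ` {wlow..}"
      using xu_ge xu_le \<gamma>1 e by (intro subsetD[OF e(2)]) (auto simp: dist_real_def)
    define x where "x = inv_into {wlow..} u xu"
    have x: "wlow \<le> x" "u x = xu" using inv_u[OF xurg] by (auto simp: x_def)
    have xgt: "wlow < x" using x xu_ge ul_lt_cs by (cases "x = wlow") (auto simp: ul_def)
    have xxmax: "x \<le> xmax" using u_le_iff[OF x(1) xmax(1)] x xmax xu_le by simp
    define w where "w = (\<lambda>z. if z \<in> S then wlow else x)"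
    have uw: "(\<lambda>z. u (w z)) = (\<lambda>z. if z \<in> S then ul else xu)"
      by (auto simp: w_def ul_def x fun_eq_iff)
    have intw: "\<And>b. b \<in> A \<Longrightarrow> integrable (M n b) w \<and> (\<integral>z. w z \<partial>M n b) = x - (x - wlow) * measure (M n b) S"
      unfolding w_def using ite_int[OF prob_M] Ss by simp
    have intu: "\<And>b. b \<in> A \<Longrightarrow> integrable (M n b) (\<lambda>z. u (w z)) \<and> (\<integral>z. u (w z) \<partial>M n b) = xu - (xu - ul) * measure (M n b) S"
      unfolding uw using ite_int[OF prob_M] Ss by simp
    have us: "(\<integral>z. u (w z) \<partial>M n astar) = cs" using intu[OF astarA] xu_eq2 by (simp add: p_def)
    have ic: "(\<integral>z. u (w z) \<partial>M n b) \<le> c b" if bA: "b \<in> A" for b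
    proof -
      interpret Pb: prob_space "M n b" using prob_M[OF bA] .
      have Pb01: "0 \<le> measure (M n b) S" "measure (M n b) S \<le> 1" by (auto simp: Pb.prob_le_1)
      have xuul: "0 \<le> xu - ul" using xu_ge ul_lt_cs by simp
      show ?thesis
      proof (cases "b = astar")
        case True then show ?thesis using us by (simp add: cs_def)
      next
        case False
        then have "c b \<noteq> cs" using c_distinct[OF bA] by (simp add: cs_def)
        then consider "cs < c b" | "c b < cs" by linarith
        then show ?thesis
        proof cases
          case 1
          then have "b \<in> H" using bA by (simp add: H_def)
          then have "xu \<le> c b" using \<gamma>H xu_le by force
          moreover have "0 \<le> (xu - ul) * measure (M n b) S" using xuul Pb01 by simp
          ultimately show ?thesis using intu[OF bA] by simp
        next
          case 2
          then have bAm: "b \<in> Am" using bA by (simp add: Am_def)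
          have "Ev n b {Lhat b b - \<delta> <..< Lhat b b + \<delta>} \<subseteq> S" using bAm by (auto simp: S_def)
          then have "measure (M n b) (Ev n b {Lhat b b - \<delta> <..< Lhat b b + \<delta>}) \<le> measure (M n b) S"
            using Ss by (intro Pb.finite_measure_mono) auto
          then have "1 - \<epsilon> < measure (M n b) S" using elim(1) bAm by fastforce
          then have "1 - measure (M n b) S \<le> \<epsilon>" by simp
          then have "(xu - ul) * (1 - measure (M n b) S) \<le> (cs + 1 - ul) * \<epsilon>"
            using xuul Pb01 xu_le \<gamma>1 \<epsilon>pos by (intro mult_mono) auto
          then have "xu - (xu - ul) * measure (M n b) S \<le> ul + (cs + 1 - ul) * \<epsilon>"
            by (simp add: algebra_simps)
          then show ?thesis using intu[OF bA] \<epsilon>A[OF bAm] by simp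
        qed
      qed
    qed
    have adm: "admissible nu g A astar wlow u c n w"
      unfolding admissible_def
    proof (intro conjI ballI)
      show "w \<in> borel_measurable nu" unfolding w_def by measurable
      show "\<And>z. z \<in> space nu \<Longrightarrow> wlow \<le> w z" using x by (simp add: w_def)
      show "integrable (M n astar) w" using intw[OF astarA] by simp
      show "\<And>b. b \<in> A \<Longrightarrow> integrable (M n b) (\<lambda>z. u (w z))" using intu by simp
      show "\<And>b. b \<in> A \<Longrightarrow> (\<integral>z. u (w z) \<partial>M n b) - c b \<le> (\<integral>z. u (w z) \<partial>M n astar) - c astar"
        using ic us by (simp add: cs_def)
      show "0 \<le> (\<integral>z. u (w z) \<partial>M n astar) - c astar" using us by (simp add: cs_def)
    qed
    have card2: "card (w ` space nu) = 2"
    proof -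
      obtain a0 where a0: "a0 \<in> Am" using Am_ne by blast
      have a0A: "a0 \<in> A" using Am_sub[OF a0] by simp
      have "0 < measure (M n a0) (Ev n a0 {Lhat a0 a0 - \<delta> <..< Lhat a0 a0 + \<delta>})"
        using elim(1) a0 \<epsilon>1 by fastforce
      then have "Ev n a0 {Lhat a0 a0 - \<delta> <..< Lhat a0 a0 + \<delta>} \<noteq> {}" by auto
      moreover have "Ev n a0 {Lhat a0 a0 - \<delta> <..< Lhat a0 a0 + \<delta>} \<subseteq> S" using a0 by (auto simp: S_def)
      ultimately obtain z1 where z1: "z1 \<in> S" by blast
      have "space nu - S \<noteq> {}"
      proof
        assume "space nu - S = {}"
        then have "S = space nu" using Ssp by blast
        then have "p = 1" using Ps.prob_space by (simp add: p_def)
        then show False using p12 by simp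
      qed
      then obtain z2 where z2: "z2 \<in> space nu" "z2 \<notin> S" by blast
      have "w ` space nu = {wlow, x}"
        using z1 z2 Ssp by (auto simp: w_def image_def)
      then show ?thesis using xgt by simp
    qed
    have cost: "(\<integral>z. w z \<partial>M n astar) \<le> wstar + K * exp (real n * (Lam + \<delta>))"
    proof -
      have "(\<integral>z. w z \<partial>M n astar) \<le> x" using intw[OF astarA] x p0le by (simp add: p_def)
      moreover have "x - wstar \<le> K * exp (real n * (Lam + \<delta>))"
      proof (cases "x \<le> wstar")
        case True
        have "0 \<le> K * exp (real n * (Lam + \<delta>))" using K by simp
        then show ?thesis using True by linarith
      next
        case False
        have "u wstar \<le> u x + u' x * (wstar - x)" by (rule tangent[OF x(1) wstar(1)])
        then have t1: "u' x * (x - wstar) \<le> xu - cs" using x wstar by (simp add: algebra_simps)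
        have "u' xmax \<le> u' x" using u'_dec[OF x(1), of xmax] xxmax by (cases "x = xmax") auto
        then have "u' xmax * (x - wstar) \<le> u' x * (x - wstar)" using False by (intro mult_right_mono) auto
        then have "u' xmax * (x - wstar) \<le> 2 * p * (cs - ul)" using t1 xu_le2 by linarith
        also have "\<dots> \<le> 2 * (N * exp (real n * (Lam + \<delta>))) * (cs - ul)"
          using pN ul_lt_cs by (intro mult_right_mono) auto
        finally have "x - wstar \<le> 2 * (N * exp (real n * (Lam + \<delta>))) * (cs - ul) / u' xmax"
          using u'_pos[OF xmax(1)] by (simp add: le_divide_eq mult.commute)
        then show ?thesis by (simp add: K_def algebra_simps)
      qed
      ultimately show ?thesis by simp
    qed
    show ?case using adm card2 cost by blast
  qed
  then show ?thesis using K by blast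
qed

end



lemma exp_rate_bounds:
  fixes f :: "nat \<Rightarrow> ereal" and L d0 :: real
  assumes d0: "0 < d0"
    and bnd: "\<And>\<delta>. 0 < \<delta> \<Longrightarrow> \<delta> < d0 \<Longrightarrow> \<exists>K1>0. \<exists>K2>0. eventually (\<lambda>n.
        ereal (K1 * exp (real n * (L - \<delta>))) \<le> f n \<and> f n \<le> ereal (K2 * exp (real n * (L + \<delta>)))) sequentially"
  shows "exp_rate f (ereal (- L))"
  unfolding exp_rate_def
proof
  obtain K1 K2 where K: "K1 > 0" "K2 > 0" and ev: "eventually (\<lambda>n.
        ereal (K1 * exp (real n * (L - d0/2))) \<le> f n \<and> f n \<le> ereal (K2 * exp (real n * (L + d0/2)))) sequentially"
    using bnd[of "d0/2"] d0 by auto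
  show "\<forall>\<^sub>F n in sequentially. 0 < f n \<and> f n < \<infinity>"
    using ev
  proof eventually_elim
    case (elim n)
    have "0 < ereal (K1 * exp (real n * (L - d0/2)))" using K by simp
    moreover have "ereal (K2 * exp (real n * (L + d0/2))) < \<infinity>" by simp
    ultimately show ?case using elim by (meson less_le_trans le_less_trans)
  qed
  have lim0: "(\<lambda>n. K / real n) \<longlonglongrightarrow> 0" for K :: real by (rule lim_const_over_n)
  have "(\<lambda>n. ln (real_of_ereal (f n)) / real n) \<longlonglongrightarrow> L"
  proof (rule order_tendstoI)
    fix a assume "a < L"
    define \<delta> where "\<delta> = min (d0/2) ((L - a)/2)"
    have \<delta>: "0 < \<delta>" "\<delta> < d0" "\<delta> \<le> (L - a)/2" using d0 \<open>a < L\<close> unfolding \<delta>_def min_def by auto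
    obtain K1 K2 where K: "K1 > 0" "K2 > 0" and ev: "eventually (\<lambda>n.
        ereal (K1 * exp (real n * (L - \<delta>))) \<le> f n \<and> f n \<le> ereal (K2 * exp (real n * (L + \<delta>)))) sequentially"
      using bnd[OF \<delta>(1,2)] by auto
    have ev2: "eventually (\<lambda>n. - ((L - a)/2) < ln K1 / real n) sequentially"
      using order_tendstoD(1)[OF lim0[of "ln K1"], of "- ((L - a)/2)"] \<open>a < L\<close> by simp
    show "eventually (\<lambda>n. a < ln (real_of_ereal (f n)) / real n) sequentially"
      using ev ev2 eventually_gt_at_top[of "0::nat"]
    proof eventually_elim
      case (elim n)
      obtain r where r: "f n = ereal r" using elim(1) by (cases "f n") auto
      have "K1 * exp (real n * (L - \<delta>)) \<le> r" using elim(1) r by simp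
      moreover have pos: "0 < K1 * exp (real n * (L - \<delta>))" using K by simp
      ultimately have "ln (K1 * exp (real n * (L - \<delta>))) \<le> ln r" by simp
      then have "ln K1 + real n * (L - \<delta>) \<le> ln r" using K by (simp add: ln_mult)
      then have "(ln K1 + real n * (L - \<delta>)) / real n \<le> ln r / real n" by (rule divide_right_mono) simp
      moreover have "(ln K1 + real n * (L - \<delta>)) / real n = ln K1 / real n + (L - \<delta>)"
        using elim(3) by (simp add: add_divide_distrib)
      ultimately have "ln K1 / real n + (L - \<delta>) \<le> ln r / real n" by simp
      then have "a < ln r / real n" using elim(2) \<delta>(3) by argo
      then show ?case using r by simp
    qed
  next
    fix a assume "L < a"
    define \<delta> where "\<delta> = min (d0/2) ((a - L)/2)"
    have \<delta>: "0 < \<delta>" "\<delta> < d0" "\<delta> \<le> (a - L)/2" using d0 \<open>L < a\<close> unfolding \<delta>_def min_def by auto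
    obtain K1 K2 where K: "K1 > 0" "K2 > 0" and ev: "eventually (\<lambda>n.
        ereal (K1 * exp (real n * (L - \<delta>))) \<le> f n \<and> f n \<le> ereal (K2 * exp (real n * (L + \<delta>)))) sequentially"
      using bnd[OF \<delta>(1,2)] by auto
    have ev2: "eventually (\<lambda>n. ln K2 / real n < (a - L)/2) sequentially"
      using order_tendstoD(2)[OF lim0[of "ln K2"], of "(a - L)/2"] \<open>L < a\<close> by simp
    show "eventually (\<lambda>n. ln (real_of_ereal (f n)) / real n < a) sequentially"
      using ev ev2 eventually_gt_at_top[of "0::nat"]
    proof eventually_elim
      case (elim n)
      obtain r where r: "f n = ereal r" using elim(1) by (cases "f n") auto
      have "r \<le> K2 * exp (real n * (L + \<delta>))" using elim(1) r by simp
      moreover have "0 < r" using elim(1) r K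
        by (metis ereal_less_eq(3) exp_gt_zero less_le_trans mult_pos_pos)
      ultimately have "ln r \<le> ln (K2 * exp (real n * (L + \<delta>)))" by simp
      then have "ln r \<le> ln K2 + real n * (L + \<delta>)" using K by (simp add: ln_mult)
      then have "ln r / real n \<le> (ln K2 + real n * (L + \<delta>)) / real n" by (rule divide_right_mono) simp
      moreover have "(ln K2 + real n * (L + \<delta>)) / real n = ln K2 / real n + (L + \<delta>)"
        using elim(3) by (simp add: add_divide_distrib)
      ultimately have "ln r / real n \<le> ln K2 / real n + (L + \<delta>)" by simp
      then have "ln r / real n < a" using elim(2) \<delta>(3) by argo
      then show ?case using r by simp
    qed
  qed
  then show "(\<lambda>n. ereal (ln (real_of_ereal (f n)) / real n)) \<longlonglongrightarrow> - ereal (- L)"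
    by simp
qed




lemma ereal_sandwich:
  fixes X :: ereal and w0 a b :: real
  assumes "ereal (w0 + a) \<le> X" "X \<le> ereal (w0 + b)"
  shows "ereal a \<le> X - ereal w0 \<and> X - ereal w0 \<le> ereal b"
  using assms by (cases X) auto

context setting begin

lemma Min_rate: "Min ((\<lambda>a. I astar a (Lhat a a)) ` {a \<in> A. c a < c astar}) = ereal (- Lam)"
proof -
  have eq: "(\<lambda>a. I astar a (Lhat a a)) ` {a \<in> A. c a < c astar} = (\<lambda>a. ereal (- Lhat a a)) ` Am"
  proof -
    have set: "{a \<in> A. c a < c astar} = Am" by (simp add: Am_def cs_def)
    show ?thesis unfolding set
    proof (rule image_cong[OF refl])
      fix x assume "x \<in> Am"
      then show "I astar x (Lhat x x) = ereal (- Lhat x x)" using Am_sub I_rate by blast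
    qed
  qed
  obtain a0 where a0: "a0 \<in> Am" "Lhat a0 a0 = Lam" using Lam_in by blast
  show ?thesis unfolding eq
  proof (rule Min_eqI)
    show "finite ((\<lambda>a. ereal (- Lhat a a)) ` Am)" using Am_fin by simp
    fix y assume "y \<in> (\<lambda>a. ereal (- Lhat a a)) ` Am"
    then obtain a where a: "a \<in> Am" "y = ereal (- Lhat a a)" by blast
    then show "ereal (- Lam) \<le> y" using Lam_ge[OF a(1)] by simp
  next
    have "ereal (- Lam) = ereal (- Lhat a0 a0)" using a0 by simp
    then show "ereal (- Lam) \<in> (\<lambda>a. ereal (- Lhat a a)) ` Am" using a0(1) by (rule image_eqI)
  qed
qed

lemma Lam_neg: "Lam < 0"
proof -
  obtain a where "a \<in> Am" "Lhat a a = Lam" using Lam_in by blast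
  then show ?thesis using lam_neg Am_sub by metis
qed

lemma both_bounds:
  assumes "0 < \<delta>" "\<delta> < - Lam"
  shows "\<exists>K1>0. \<exists>K2>0. eventually (\<lambda>n.
     ereal (wstar + K1 * exp (real n * (Lam - \<delta>))) \<le> C_SB nu g A astar wlow u c n \<and>
     C_SB nu g A astar wlow u c n \<le> C_bin nu g A astar wlow u c n \<and>
     C_bin nu g A astar wlow u c n \<le> ereal (wstar + K2 * exp (real n * (Lam + \<delta>)))) sequentially"
proof -
  obtain a0 where a0: "a0 \<in> Am" "Lhat a0 a0 = Lam" using Lam_in by blast
  obtain K1 where K1: "K1 > 0" and ev1: "eventually (\<lambda>n. \<forall>w. admissible nu g A astar wlow u c n w \<longrightarrow>
            wstar + K1 * exp (real n * (Lhat a0 a0 - \<delta>)) \<le> (\<integral>z. w z \<partial>M n astar)) sequentially"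
    using LB[OF a0(1) assms(1)] by blast
  have L\<delta>: "Lam + \<delta> < 0" using assms(2) by simp
  obtain K2 where K2: "K2 > 0" and ev2: "eventually (\<lambda>n. \<exists>w. admissible nu g A astar wlow u c n w \<and> card (w ` space nu) = 2 \<and>
            (\<integral>z. w z \<partial>M n astar) \<le> wstar + K2 * exp (real n * (Lam + \<delta>))) sequentially"
    using UB[OF assms(1) L\<delta>] by blast
  have "eventually (\<lambda>n.
     ereal (wstar + K1 * exp (real n * (Lam - \<delta>))) \<le> C_SB nu g A astar wlow u c n \<and>
     C_SB nu g A astar wlow u c n \<le> C_bin nu g A astar wlow u c n \<and>
     C_bin nu g A astar wlow u c n \<le> ereal (wstar + K2 * exp (real n * (Lam + \<delta>)))) sequentially"
    using ev1 ev2
  proof eventually_elim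
    case (elim n)
    obtain w where w: "admissible nu g A astar wlow u c n w" "card (w ` space nu) = 2"
      "(\<integral>z. w z \<partial>M n astar) \<le> wstar + K2 * exp (real n * (Lam + \<delta>))" using elim(2) by blast
    have 1: "ereal (wstar + K1 * exp (real n * (Lam - \<delta>))) \<le> C_SB nu g A astar wlow u c n"
      unfolding C_SB_def using elim(1) a0(2) by (auto intro!: INF_greatest)
    have 2: "C_SB nu g A astar wlow u c n \<le> C_bin nu g A astar wlow u c n"
      unfolding C_SB_def C_bin_def by (rule INF_superset_mono) auto
    have "C_bin nu g A astar wlow u c n \<le> ereal (\<integral>z. w z \<partial>M n astar)"
      unfolding C_bin_def using w(1,2) by (auto intro!: INF_lower)
    also have "\<dots> \<le> ereal (wstar + K2 * exp (real n * (Lam + \<delta>)))" using w(3) by simp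
    finally show ?case using 1 2 by simp
  qed
  note evb = this
  show ?thesis
    apply (rule exI[of _ K1], rule conjI[OF K1], rule exI[of _ K2], rule conjI[OF K2])
    apply (rule evb)
    done
qed

lemma main:
  shows "exp_rate (\<lambda>n. C_SB nu g A astar wlow u c n - ereal (C_FB wlow u c astar))
            (Min ((\<lambda>a. I astar a (Lhat a a)) ` {a \<in> A. c a < c astar})) \<and>
         exp_rate (\<lambda>n. C_bin nu g A astar wlow u c n - ereal (C_FB wlow u c astar))
            (Min ((\<lambda>a. I astar a (Lhat a a)) ` {a \<in> A. c a < c astar}))"
proof -
  have fb: "C_FB wlow u c astar = wstar" by (simp add: C_FB_def wstar_def cs_def)
  have d0: "0 < - Lam" using Lam_neg by simp
  show ?thesis unfolding Min_rate fb
  proof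
    show "exp_rate (\<lambda>n. C_SB nu g A astar wlow u c n - ereal wstar) (ereal (- Lam))"
    proof (rule exp_rate_bounds[OF d0])
      fix \<delta> :: real assume "0 < \<delta>" "\<delta> < - Lam"
      from both_bounds[OF this] obtain K1 K2 where K: "K1 > 0" "K2 > 0" and ev: "eventually (\<lambda>n.
         ereal (wstar + K1 * exp (real n * (Lam - \<delta>))) \<le> C_SB nu g A astar wlow u c n \<and>
         C_SB nu g A astar wlow u c n \<le> C_bin nu g A astar wlow u c n \<and>
         C_bin nu g A astar wlow u c n \<le> ereal (wstar + K2 * exp (real n * (Lam + \<delta>)))) sequentially" by blast
      have "eventually (\<lambda>n. ereal (K1 * exp (real n * (Lam - \<delta>))) \<le> C_SB nu g A astar wlow u c n - ereal wstar \<and>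
           C_SB nu g A astar wlow u c n - ereal wstar \<le> ereal (K2 * exp (real n * (Lam + \<delta>)))) sequentially"
        using ev
      proof eventually_elim
        case (elim n)
        then have a: "ereal (wstar + K1 * exp (real n * (Lam - \<delta>))) \<le> C_SB nu g A astar wlow u c n"
          and b: "C_SB nu g A astar wlow u c n \<le> C_bin nu g A astar wlow u c n"
          and c: "C_bin nu g A astar wlow u c n \<le> ereal (wstar + K2 * exp (real n * (Lam + \<delta>)))"
          by blast+
        show ?case by (rule ereal_sandwich[OF a order.trans[OF b c]])
      qed
      note evb = this
      show "\<exists>K1>0. \<exists>K2>0. eventually (\<lambda>n. ereal (K1 * exp (real n * (Lam - \<delta>))) \<le> C_SB nu g A astar wlow u c n - ereal wstar \<and>
           C_SB nu g A astar wlow u c n - ereal wstar \<le> ereal (K2 * exp (real n * (Lam + \<delta>)))) sequentially"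
        apply (rule exI[of _ K1], rule conjI[OF K(1)], rule exI[of _ K2], rule conjI[OF K(2)])
        apply (rule evb)
        done
    qed
  next
    show "exp_rate (\<lambda>n. C_bin nu g A astar wlow u c n - ereal wstar) (ereal (- Lam))"
    proof (rule exp_rate_bounds[OF d0])
      fix \<delta> :: real assume "0 < \<delta>" "\<delta> < - Lam"
      from both_bounds[OF this] obtain K1 K2 where K: "K1 > 0" "K2 > 0" and ev: "eventually (\<lambda>n.
         ereal (wstar + K1 * exp (real n * (Lam - \<delta>))) \<le> C_SB nu g A astar wlow u c n \<and>
         C_SB nu g A astar wlow u c n \<le> C_bin nu g A astar wlow u c n \<and>
         C_bin nu g A astar wlow u c n \<le> ereal (wstar + K2 * exp (real n * (Lam + \<delta>)))) sequentially" by blast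
      have "eventually (\<lambda>n. ereal (K1 * exp (real n * (Lam - \<delta>))) \<le> C_bin nu g A astar wlow u c n - ereal wstar \<and>
           C_bin nu g A astar wlow u c n - ereal wstar \<le> ereal (K2 * exp (real n * (Lam + \<delta>)))) sequentially"
        using ev
      proof eventually_elim
        case (elim n)
        then have a: "ereal (wstar + K1 * exp (real n * (Lam - \<delta>))) \<le> C_SB nu g A astar wlow u c n"
          and b: "C_SB nu g A astar wlow u c n \<le> C_bin nu g A astar wlow u c n"
          and c: "C_bin nu g A astar wlow u c n \<le> ereal (wstar + K2 * exp (real n * (Lam + \<delta>)))"
          by blast+
        show ?case by (rule ereal_sandwich[OF order.trans[OF a b] c])
      qed
      note evb = this
      show "\<exists>K1>0. \<exists>K2>0. eventually (\<lambda>n. ereal (K1 * exp (real n * (Lam - \<delta>))) \<le> C_bin nu g A astar wlow u c n - ereal wstar \<and>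
           C_bin nu g A astar wlow u c n - ereal wstar \<le> ereal (K2 * exp (real n * (Lam + \<delta>)))) sequentially"
        apply (rule exI[of _ K1], rule conjI[OF K(1)], rule exI[of _ K2], rule conjI[OF K(2)])
        apply (rule evb)
        done
    qed
  qed
qed

end

theorem theorem4:
  fixes A :: "'a set" and astar :: 'a
    and nu :: "'z measure" and g :: "nat \<Rightarrow> 'a \<Rightarrow> 'z \<Rightarrow> real"
    and I :: "'a \<Rightarrow> 'a \<Rightarrow> real \<Rightarrow> ereal" and Lhat :: "'a \<Rightarrow> 'a \<Rightarrow> real"
    and wlow :: real and u u' u'' :: "real \<Rightarrow> real" and c :: "'a \<Rightarrow> real"
  assumes finA: "finite A" and astarA: "astar \<in> A"
    and sfin: "sigma_finite_measure nu"
    and g_meas: "\<And>n a. a \<in> A \<Longrightarrow> g n a \<in> borel_measurable nu"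
    and g_nonneg: "\<And>n a z. a \<in> A \<Longrightarrow> z \<in> space nu \<Longrightarrow> 0 \<le> g n a z"
    and g_prob: "\<And>n a. a \<in> A \<Longrightarrow> prob_space (mon nu g n a)"
    and score_wd: "\<And>n a a'. a \<in> A \<Longrightarrow> a' \<in> A \<Longrightarrow> a' \<noteq> astar \<Longrightarrow>
        AE z in mon nu g n a. 0 < g n astar z \<and> 0 < g n a' z"
    and LD: "\<And>a a' B. a \<in> A \<Longrightarrow> a' \<in> A \<Longrightarrow> a' \<noteq> astar \<Longrightarrow> B \<in> sets borel \<Longrightarrow>
        - (INF l \<in> interior B. I a a' l) \<le> liminf (ld_rate nu g astar a a' B) \<and>
        limsup (ld_rate nu g astar a a' B) \<le> - (INF l \<in> closure B. I a a' l)"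
    and I_nonneg: "\<And>a a' l. a \<in> A \<Longrightarrow> a' \<in> A \<Longrightarrow> a' \<noteq> astar \<Longrightarrow> 0 \<le> I a a' l"
    and Lhat_min: "\<And>a a' l. a \<in> A \<Longrightarrow> a' \<in> A \<Longrightarrow> a' \<noteq> astar \<Longrightarrow>
        I a a' (Lhat a a') \<le> I a a' l"
    and Lhat_unique: "\<And>a a' l. a \<in> A \<Longrightarrow> a' \<in> A \<Longrightarrow> a' \<noteq> astar \<Longrightarrow>
        (\<forall>l'. I a a' l \<le> I a a' l') \<Longrightarrow> l = Lhat a a'"
    and ident: "\<And>a b a'. a \<in> A \<Longrightarrow> b \<in> A \<Longrightarrow> a' \<in> A \<Longrightarrow> a' \<noteq> astar \<Longrightarrow>
        a \<noteq> b \<Longrightarrow> Lhat a a' \<noteq> Lhat b a'"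
    and level_compact: "\<And>a a' t. a \<in> A \<Longrightarrow> a' \<in> A \<Longrightarrow> a' \<noteq> astar \<Longrightarrow>
        compact {l. I a a' l \<le> ereal t}"
    and cont1: "\<And>a'. a' \<in> A \<Longrightarrow> a' \<noteq> astar \<Longrightarrow> isCont (I astar a') (Lhat a' a')"
    and cont2: "\<And>a'. a' \<in> A \<Longrightarrow> a' \<noteq> astar \<Longrightarrow> isCont (I astar a') (Lhat astar a')"
    and u_d1: "\<And>w. wlow \<le> w \<Longrightarrow> (u has_real_derivative u' w) (at w within {wlow..})"
    and u_d2: "\<And>w. wlow \<le> w \<Longrightarrow> (u' has_real_derivative u'' w) (at w within {wlow..})"
    and u_C2: "continuous_on {wlow..} u''"
    and u'_pos: "\<And>w. wlow \<le> w \<Longrightarrow> 0 < u' w"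
    and u''_neg: "\<And>w. wlow \<le> w \<Longrightarrow> u'' w < 0"
    and u'_lim: "(u' \<longlongrightarrow> 0) at_top"
    and c_range: "c ` A \<subseteq> interior (u ` {wlow..})"
    and c_some: "\<exists>a\<in>A. c a < c astar"
    and c_distinct: "\<And>a. a \<in> A \<Longrightarrow> a \<noteq> astar \<Longrightarrow> c a \<noteq> c astar"
  shows "exp_rate (\<lambda>n. C_SB nu g A astar wlow u c n - ereal (C_FB wlow u c astar))
            (Min ((\<lambda>a. I astar a (Lhat a a)) ` {a \<in> A. c a < c astar})) \<and>
         exp_rate (\<lambda>n. C_bin nu g A astar wlow u c n - ereal (C_FB wlow u c astar))
            (Min ((\<lambda>a. I astar a (Lhat a a)) ` {a \<in> A. c a < c astar}))"
proof -
  interpret setting A astar nu g I Lhat wlow u u' u'' c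
    by (rule setting.intro[OF ld.intro[OF finA astarA g_meas g_nonneg g_prob score_wd LD I_nonneg Lhat_min
        Lhat_unique ident level_compact cont1] ufacts.intro[OF u_d1 u_d2 u'_pos u''_neg]
        setting_axioms.intro[OF c_range c_some c_distinct]])
  show ?thesis by (rule main)
qed

end
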